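(* Let $n\ge 1$ and let $\mathcal{A}\subseteq \mathcal{S}\times\mathcal{X}^n$ be a nonempty set of input pairs. The following are equivalent: (a) $d_n\big((s_0,\mathbf{x}),(\hat s_0,\hat{\mathbf{x}})\big)\le \beta$ for all $(s_0,\mathbf{x}),(\hat s_0,\hat{\mathbf{x}})\in\mathcal{A}$; (b) there exists a single sequence $\mathbf{y}_{\mathcal{A}}\in\mathbb{Z}^n$ with $\mathbf{y}_{\mathcal{A}}\in \bigcap_{(s_0,\mathbf{x})\in\mathcal{A}} \mathcal{Y}^n(s_0,\mathbf{x})$, where the feasible sets are taken with output alphabet $\mathcal{Y}=\mathbb{Z}$.
   Context: Fix integers $\alpha\ge 1$ (maximal consumption per step) and $\beta\ge 0$ (battery capacity). Let $\mathcal{X}=\{0,1,\dots,\alpha\}$ and $\mathcal{S}=\{0,1,\dots,\beta\}$. For an initial battery state $s_0\in\mathcal{S}$, a consumption sequence $\mathbf{x}=(x_0,\dots,x_{n-1})\in\mathcal{X}^n$ and a request sequence $\mathbf{y}=(y_0,\dots,y_{n-1})\in\mathbb{Z}^n$, the battery states are $s_i=s_0+\sum_{k=0}^{i-1}y_k-\sum_{k=0}^{i-1}x_k$ for $i=0,1,\dots,n$. For an output alphabet $\mathcal{Y}\subseteq\mathbb{Z}$, the set of feasible requests is $\mathcal{Y}^n(s_0,\mathbf{x})=\{\mathbf{y}\in\mathcal{Y}^n: s_i\in\{0,\dots,\beta\}\text{ for all } i=0,\dots,n\}$. The distance between two input pairs is $d_n\big((s_0,\mathbf{x}),(\hat s_0,\hat{\mathbf{x}})\big)=\max_{0\le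 i\le n-1}\big|(s_0-\sum_{k=0}^{i}x_k)-(\hat s_0-\sum_{k=0}^{i}\hat x_k)\big|$. *)

theory Defs
  imports Main
begin

definition cons_alph :: "int \<Rightarrow> int set" where
  "cons_alph alpha = {0..alpha}"

definition state_set :: "int \<Rightarrow> int set" where
  "state_set beta = {0..beta}"

definition bstate :: "int \<Rightarrow> int list \<Rightarrow> int list \<Rightarrow> nat \<Rightarrow> int" where
  "bstate s0 x y i = s0 + (\<Sum>k<i. y ! k) - (\<Sum>k<i. x ! k)"

definition feasible :: "int \<Rightarrow> int set \<Rightarrow> nat \<Rightarrow> int \<Rightarrow> int list \<Rightarrow> int list set" where
  "feasible beta Y n s0 x =
     {y. length y = n \<and> set y \<subseteq> Y \<and> (\<forall>i\<le>n. bstate s0 x y i \<in> {0..beta})}"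

definition input_pairs :: "int \<Rightarrow> int \<Rightarrow> nat \<Rightarrow> (int \<times> int list) set" where
  "input_pairs alpha beta n =
     {(s0, x). s0 \<in> state_set beta \<and> length x = n \<and> set x \<subseteq> cons_alph alpha}"

definition dist_n :: "nat \<Rightarrow> int \<times> int list \<Rightarrow> int \<times> int list \<Rightarrow> int" where
  "dist_n n p q = Max ((\<lambda>i. \<bar>(fst p - (\<Sum>k\<le>i. snd p ! k)) - (fst q - (\<Sum>k\<le>i. snd q ! k))\<bar>) ` {0..<n})"

end

theory Submission
  imports Defs
begin

theorem lemma1:
  fixes alpha beta :: int and n :: nat and A :: "(int \<times> int list) set"
  assumes "alpha \<ge> 1" and "beta \<ge> 0" and "n \<ge> 1"
    and "A \<subseteq> input_pairs alpha beta n" and "A \<noteq> {}"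
  shows "(\<forall>p\<in>A. \<forall>q\<in>A. dist_n n p q \<le> beta) \<longleftrightarrow>
         (\<exists>y. y \<in> (\<Inter>p\<in>A. feasible beta UNIV n (fst p) (snd p)))"
proof -
  define a where "a p j = fst p - (\<Sum>k\<le>j. snd p ! k)" for p :: "int \<times> int list" and j :: nat
  have bs: "bstate (fst p) (snd p) y (Suc j) = a p j + (\<Sum>k\<le>j. y ! k)" for p y j
    unfolding bstate_def a_def by (simp add: lessThan_Suc_atMost)
  have dist: "dist_n n p q \<le> beta \<longleftrightarrow> (\<forall>j<n. \<bar>a p j - a q j\<bar> \<le> beta)" for p q
  proof -
    have "dist_n n p q = Max ((\<lambda>j. \<bar>a p j - a q j\<bar>) ` {0..<n})"
      unfolding dist_n_def a_def by simp
    moreover have "{0..<n} \<noteq> {}" using assms(3) by auto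
    ultimately show ?thesis by auto
  qed
  have s0: "fst p \<in> {0..beta}" if "p \<in> A" for p
    using assms(4) that by (auto simp: input_pairs_def state_set_def)
  show ?thesis
  proof
    assume H: "\<forall>p\<in>A. \<forall>q\<in>A. dist_n n p q \<le> beta"
    hence H': "\<And>p q j. p \<in> A \<Longrightarrow> q \<in> A \<Longrightarrow> j < n \<Longrightarrow> \<bar>a p j - a q j\<bar> \<le> beta"
      using dist by blast
    have fin: "finite ((\<lambda>p. a p j) ` A)" if "j < n" for j
    proof (rule finite_subset)
      show "(\<lambda>p. a p j) ` A \<subseteq> {- (int n * alpha)..beta}"
      proof
        fix v assume "v \<in> (\<lambda>p. a p j) ` A"
        then obtain p where p: "p \<in> A" "v = a p j" by auto
        have len: "length (snd p) = n" and sx: "set (snd p) \<subseteq> {0..alpha}"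
          proof -
          have "p \<in> input_pairs alpha beta n" using assms(4) p(1) by blast
          thus "length (snd p) = n" "set (snd p) \<subseteq> {0..alpha}"
            unfolding input_pairs_def cons_alph_def by (auto split: prod.splits)
        qed
        have el: "snd p ! k \<in> {0..alpha}" if "k \<le> j" for k
          using sx len that \<open>j < n\<close> by (meson le_less_trans nth_mem subsetD)
        have "(\<Sum>k\<le>j. snd p ! k) \<le> of_nat (card {..j}) * alpha"
          by (rule sum_bounded_above) (use el in auto)
        also have "\<dots> \<le> int n * alpha" using \<open>j < n\<close> assms(1) by (simp add: mult_right_mono)
        finally have u: "(\<Sum>k\<le>j. snd p ! k) \<le> int n * alpha" .
        have "0 \<le> (\<Sum>k\<le>j. snd p ! k)" by (rule sum_nonneg) (use el in auto)
        thus "v \<in> {- (int n * alpha)..beta}" using u s0[OF p(1)] p(2) unfolding a_def by auto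
      qed
    qed simp
    define m where "m j = - Min ((\<lambda>p. a p j) ` A)" for j
    define c where "c i = (if i = 0 then 0 else m (i - 1))" for i
    define y where "y = map (\<lambda>k. c (Suc k) - c k) [0..<n]"
    have sy: "(\<Sum>k\<le>j. y ! k) = m j" if "j < n" for j
    proof -
      have "(\<Sum>k\<le>j. y ! k) = (\<Sum>k<Suc j. c (Suc k) - c k)"
        using that by (auto simp: y_def lessThan_Suc_atMost intro!: sum.cong)
      also have "\<dots> = c (Suc j) - c 0" by (rule sum_lessThan_telescope)
      finally show ?thesis by (simp add: c_def)
    qed
    show "\<exists>y. y \<in> (\<Inter>p\<in>A. feasible beta UNIV n (fst p) (snd p))"
    proof -
      have ly: "length y = n" by (simp add: y_def)
      have B: "0 \<le> bstate s0 x y i \<and> bstate s0 x y i \<le> beta" if p: "(s0, x) \<in> A" and i: "i \<le> n" for s0 x i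
      proof -
      show "0 \<le> bstate s0 x y i \<and> bstate s0 x y i \<le> beta"
      proof (cases i)
        case 0 thus ?thesis using s0[OF p] by (simp add: bstate_def)
      next
        case (Suc j)
        hence j: "j < n" using i by auto
        have b: "bstate s0 x y i = a (s0, x) j + m j" using bs[of "(s0,x)" y j] sy[OF j] Suc by simp
        obtain q where q: "q \<in> A" "Min ((\<lambda>p. a p j) ` A) = a q j"
          using Min_in[OF fin[OF j]] assms(5) by auto
        have "Min ((\<lambda>p. a p j) ` A) \<le> a (s0, x) j" using fin[OF j] p by (intro Min_le) auto
        moreover have "\<bar>a (s0,x) j - a q j\<bar> \<le> beta" using H' p q(1) j by blast
        ultimately show ?thesis using b q(2) unfolding m_def by auto
      qed
      qed
      show ?thesis unfolding feasible_def using ly B by (intro exI[of _ y]) auto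
    qed
  next
    assume "\<exists>y. y \<in> (\<Inter>p\<in>A. feasible beta UNIV n (fst p) (snd p))"
    then obtain y where y: "\<And>p. p \<in> A \<Longrightarrow> y \<in> feasible beta UNIV n (fst p) (snd p)" by auto
    show "\<forall>p\<in>A. \<forall>q\<in>A. dist_n n p q \<le> beta"
    proof (intro ballI, subst dist, intro allI impI)
      fix p q j assume p: "p \<in> A" and q: "q \<in> A" and j: "j < n"
      have "bstate (fst p) (snd p) y (Suc j) \<in> {0..beta}" "bstate (fst q) (snd q) y (Suc j) \<in> {0..beta}"
        using y[OF p] y[OF q] j by (auto simp: feasible_def)
      thus "\<bar>a p j - a q j\<bar> \<le> beta" unfolding bs by auto
    qed
  qed
qed

end
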